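(* Let $V$ be a finite set, $h:2^V\to\mathbb{R}_{\ge0}$ a non-negative submodular function, $a\in\mathbb{R}^V$ with $\max_ia_i>0$, $f(\delta):=\min_{S\subseteq V}h_\delta(S)$ with $h_\delta(S):=h(S)-\delta a(S)$, and $\delta^*$ the largest root of $f$. Let $\delta^{(1)}>\dots>\delta^{(\ell)}=\delta^*$ be the iterates of the look-ahead Newton–Dinkelbach method on $f$ (with the initialization in the context), and for $i\in[\ell]$ let $S^{(i)}\in\operatorname{argmax}\{a(S): S\in\operatorname{argmin}_{T\subseteq V}h_{\delta^{(i)}}(T)\}$. Let $q:=\lfloor(\ell+3)/4\rfloor$ and $T_i:=S^{(\ell-4(i-1))}$ for $i\in[q]$. Then $h_{\delta^*}$ is a non-negative submodular function, the sets $T_1,\dots,T_q$ are distinct, and $h_{\delta^*}(T_{i+1})>4h_{\delta^*}(T_i)$ for all $i\in[q-1]$.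
   Context: $a(S):=\sum_{i\in S}a_i$. Supergradients of $f$ at $\delta$ are obtained as $-a(S)$ for minimizers $S$ of $h_\delta$. Initialization: $\delta^{(1)}:=\min\{h(\{i\})/a_i: a_i>0\}$; if $f(\delta^{(1)})=0$ stop; otherwise $g^{(1)}:=-a(S)$ for a minimizer $S$ of $h_{\delta^{(1)}}$ (then $g^{(1)}<0$). Look-ahead Newton–Dinkelbach method: for $i=1,2,\dots$: if $f(\delta^{(i)})=0$ return $\delta^{(i)}$; else $\delta:=\delta^{(i)}-f(\delta^{(i)})/g^{(i)}$ with a supergradient $g$ at $\delta$; return NO ROOT if $f(\delta)<0$ and $g\ge0$; let $\delta':=2\delta-\delta^{(i)}$ with supergradient $g'$; if $f(\delta')<0$ and $g'<0$ replace $(\delta,g)$ by $(\delta',g')$; set $\delta^{(i+1)}:=\delta$, $g^{(i+1)}:=g$. *)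

theory Defs
  imports Main "HOL.Real"
begin

definition asum :: "('v \<Rightarrow> real) \<Rightarrow> 'v set \<Rightarrow> real" where
  "asum a S = (\<Sum>i\<in>S. a i)"

definition hdelta :: "('v set \<Rightarrow> real) \<Rightarrow> ('v \<Rightarrow> real) \<Rightarrow> real \<Rightarrow> 'v set \<Rightarrow> real" where
  "hdelta h a d S = h S - d * asum a S"

definition fval :: "'v set \<Rightarrow> ('v set \<Rightarrow> real) \<Rightarrow> ('v \<Rightarrow> real) \<Rightarrow> real \<Rightarrow> real" where
  "fval V h a d = Min (hdelta h a d ` Pow V)"

definition is_minimizer :: "'v set \<Rightarrow> ('v set \<Rightarrow> real) \<Rightarrow> ('v \<Rightarrow> real) \<Rightarrow> real \<Rightarrow> 'v set \<Rightarrow> bool" where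
  "is_minimizer V h a d S \<longleftrightarrow> S \<subseteq> V \<and> (\<forall>T. T \<subseteq> V \<longrightarrow> hdelta h a d S \<le> hdelta h a d T)"

definition submodular_on :: "'v set \<Rightarrow> ('v set \<Rightarrow> real) \<Rightarrow> bool" where
  "submodular_on V g \<longleftrightarrow>
     (\<forall>S T. S \<subseteq> V \<longrightarrow> T \<subseteq> V \<longrightarrow> g (S \<union> T) + g (S \<inter> T) \<le> g S + g T)"

definition nonneg_on :: "'v set \<Rightarrow> ('v set \<Rightarrow> real) \<Rightarrow> bool" where
  "nonneg_on V g \<longleftrightarrow> (\<forall>S. S \<subseteq> V \<longrightarrow> 0 \<le> g S)"

text \<open>A terminating run of the look-ahead Newton-Dinkelbach method that returns a root,
  with iterates ds 1, ..., ds l and supergradients gs 1, ..., gs l. Supergradients are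
  of the form -a(S) for a minimizer S of h_delta (choices are existential).\<close>
definition lnd_run :: "'v set \<Rightarrow> ('v set \<Rightarrow> real) \<Rightarrow> ('v \<Rightarrow> real) \<Rightarrow> nat
    \<Rightarrow> (nat \<Rightarrow> real) \<Rightarrow> (nat \<Rightarrow> real) \<Rightarrow> bool" where
  "lnd_run V h a l ds gs \<longleftrightarrow>
     1 \<le> l \<and>
     ds 1 = Min {h {i} / a i | i. i \<in> V \<and> 0 < a i} \<and>
     (fval V h a (ds 1) \<noteq> 0 \<longrightarrow>
        (\<exists>S. is_minimizer V h a (ds 1) S \<and> gs 1 = - asum a S)) \<and>
     (\<forall>i\<in>{1..<l}. fval V h a (ds i) \<noteq> 0) \<and>
     fval V h a (ds l) = 0 \<and>
     (\<forall>i\<in>{1..<l}. \<exists>S S'.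
        let d = ds i - fval V h a (ds i) / gs i;
            d' = 2 * d - ds i;
            g = - asum a S;
            g' = - asum a S'
        in is_minimizer V h a d S \<and> is_minimizer V h a d' S' \<and>
           \<not> (fval V h a d < 0 \<and> 0 \<le> g) \<and>
           (if fval V h a d' < 0 \<and> g' < 0
            then ds (Suc i) = d' \<and> gs (Suc i) = g'
            else ds (Suc i) = d \<and> gs (Suc i) = g))"

end

theory Submission
  imports Defs Complex_Main
begin

lemma cont_Min_fam:
  fixes g :: "'s \<Rightarrow> real \<Rightarrow> real"
  assumes "finite F" "F \<noteq> {}" "\<And>S. continuous_on UNIV (g S)"
  shows "continuous_on UNIV (\<lambda>d. Min ((\<lambda>S. g S d) ` F))"
  using assms(1,2)
proof (induction F rule: finite_ne_induct)
  case (singleton x)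
  then show ?case using assms(3) by simp
next
  case (insert x F)
  have eq: "(\<lambda>d. Min ((\<lambda>S. g S d) ` insert x F)) = (\<lambda>d. min (g x d) (Min ((\<lambda>S. g S d) ` F)))"
    using insert by (auto simp: Min_insert)
  show ?case unfolding eq by (intro continuous_on_min assms(3) insert.IH)
qed

lemma fval_cont:
  assumes "finite V"
  shows "continuous_on UNIV (fval V h a)"
proof -
  have "fval V h a = (\<lambda>d. Min ((\<lambda>S. hdelta h a d S) ` Pow V))"
    by (auto simp: fval_def)
  moreover have "continuous_on UNIV (\<lambda>d. Min ((\<lambda>S. hdelta h a d S) ` Pow V))"
    by (rule cont_Min_fam) (auto simp: assms hdelta_def intro!: continuous_intros)
  ultimately show ?thesis by simp
qed

lemma fval_le:
  assumes "finite V" "S \<subseteq> V"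
  shows "fval V h a d \<le> hdelta h a d S"
  unfolding fval_def using assms by (intro Min_le) auto

lemma fval_attained:
  assumes "finite V"
  shows "\<exists>S. S \<subseteq> V \<and> fval V h a d = hdelta h a d S"
proof -
  have "fval V h a d \<in> hdelta h a d ` Pow V"
    unfolding fval_def using assms by (intro Min_in) auto
  then show ?thesis by auto
qed

lemma minimizer_val:
  assumes "finite V" "is_minimizer V h a d S"
  shows "fval V h a d = hdelta h a d S"
proof -
  obtain T where T: "T \<subseteq> V" "fval V h a d = hdelta h a d T" using fval_attained[OF assms(1)] by blast
  have "hdelta h a d S \<le> hdelta h a d T" using assms(2) T(1) by (auto simp: is_minimizer_def)
  moreover have "fval V h a d \<le> hdelta h a d S" using assms by (intro fval_le) (auto simp: is_minimizer_def)
  ultimately show ?thesis using T by simp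
qed

lemma slope_mono:
  assumes "d1 < d2" "is_minimizer V h a d1 T" "is_minimizer V h a d2 S"
  shows "asum a T \<le> asum a S"
proof -
  have "hdelta h a d1 T \<le> hdelta h a d1 S" "hdelta h a d2 S \<le> hdelta h a d2 T"
    using assms by (auto simp: is_minimizer_def)
  then have "(d2 - d1) * asum a T \<le> (d2 - d1) * asum a S"
    by (simp add: hdelta_def algebra_simps)
  then show ?thesis using assms(1) by simp
qed

lemma neg_right:
  assumes finV: "finite V" and apos: "\<exists>i\<in>V. 0 < a i"
    and largest: "\<forall>d. fval V h a d = 0 \<longrightarrow> d \<le> dstar"
    and x: "dstar < x"
  shows "fval V h a x < 0"
proof (rule ccontr)
  assume "\<not> fval V h a x < 0"
  then have fx: "0 \<le> fval V h a x" by simp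
  obtain i where i: "i \<in> V" "0 < a i" using apos by blast
  define y where "y = max x ((h {i} + 1) / a i)"
  have "y * a i \<ge> ((h {i} + 1) / a i) * a i" unfolding y_def using i by (intro mult_right_mono) auto
  then have ya: "y * a i \<ge> h {i} + 1" using i by simp
  have "fval V h a y \<le> hdelta h a y {i}" using finV i by (intro fval_le) auto
  also have "\<dots> = h {i} - y * a i" by (simp add: hdelta_def asum_def)
  finally have fy: "fval V h a y \<le> 0" using ya by simp
  have "x \<le> y" by (simp add: y_def)
  then obtain r where r: "x \<le> r" "r \<le> y" "fval V h a r = 0"
    using IVT2'[of "fval V h a" y 0 x] fx fy fval_cont[OF finV] continuous_on_subset by blast
  then show False using largest x by force
qed


theorem lemma5p4:
  fixes V :: "'v set" and h :: "'v set \<Rightarrow> real" and a :: "'v \<Rightarrow> real"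
    and dstar :: real and l :: nat and ds gs :: "nat \<Rightarrow> real" and S :: "nat \<Rightarrow> 'v set"
  assumes finV: "finite V"
    and hnonneg: "nonneg_on V h"
    and hsub: "submodular_on V h"
    and apos: "\<exists>i\<in>V. 0 < a i"
    and root: "fval V h a dstar = 0"
    and largest: "\<forall>d. fval V h a d = 0 \<longrightarrow> d \<le> dstar"
    and run: "lnd_run V h a l ds gs"
    and decr: "\<forall>i j. 1 \<le> i \<longrightarrow> i < j \<longrightarrow> j \<le> l \<longrightarrow> ds j < ds i"
    and last: "ds l = dstar"
    and Sdef: "\<forall>i\<in>{1..l}. is_minimizer V h a (ds i) (S i) \<and>
                 (\<forall>T. is_minimizer V h a (ds i) T \<longrightarrow> asum a T \<le> asum a (S i))"
  shows "nonneg_on V (hdelta h a dstar) \<and> submodular_on V (hdelta h a dstar) \<and>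
         (let q = (l + 3) div 4; T = (\<lambda>i. S (l - 4 * (i - 1))) in
            inj_on T {1..q} \<and>
            (\<forall>i\<in>{1..<q}. hdelta h a dstar (T (Suc i)) > 4 * hdelta h a dstar (T i)))"
proof -
  let ?f = "fval V h a"
  have hnn: "\<And>T. T \<subseteq> V \<Longrightarrow> 0 \<le> h T" using hnonneg by (auto simp: nonneg_on_def)
  have part1: "nonneg_on V (hdelta h a dstar)"
    unfolding nonneg_on_def using fval_le[OF finV, of _ h a dstar] root by auto
  have part2: "submodular_on V (hdelta h a dstar)"
    unfolding submodular_on_def
  proof (intro allI impI)
    fix X Y assume XY: "X \<subseteq> V" "Y \<subseteq> V"
    then have fin: "finite X" "finite Y" using finV finite_subset by auto
    have "asum a (X \<union> Y) + asum a (X \<inter> Y) = asum a X + asum a Y"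
      unfolding asum_def using sum.union_inter[OF fin] by simp
    then have "dstar * asum a (X \<union> Y) + dstar * asum a (X \<inter> Y) = dstar * asum a X + dstar * asum a Y"
      by (metis distrib_left)
    moreover have "h (X \<union> Y) + h (X \<inter> Y) \<le> h X + h Y" using hsub XY by (auto simp: submodular_on_def)
    ultimately show "hdelta h a dstar (X \<union> Y) + hdelta h a dstar (X \<inter> Y)
        \<le> hdelta h a dstar X + hdelta h a dstar Y"
      unfolding hdelta_def by linarith
  qed
  have l1: "1 \<le> l" using run by (simp add: lnd_run_def)
  have dstar_nn: "0 \<le> dstar"
  proof (rule ccontr)
    assume "\<not> 0 \<le> dstar"
    then have "?f 0 < 0" using neg_right[OF finV apos largest] by simp
    moreover obtain T where T: "T \<subseteq> V" "?f 0 = hdelta h a 0 T" using fval_attained[OF finV] by blast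
    ultimately have "h T < 0" by (simp add: hdelta_def)
    then show False using hnn[OF T(1)] by simp
  qed
  obtain i0 where i0: "i0 \<in> V" "0 < a i0" "ds 1 = h {i0} / a i0"
  proof -
    have eq: "{h {i} / a i | i. i \<in> V \<and> 0 < a i} = (\<lambda>i. h {i} / a i) ` {i \<in> V. 0 < a i}" by auto
    have "Min {h {i} / a i | i. i \<in> V \<and> 0 < a i} \<in> {h {i} / a i | i. i \<in> V \<and> 0 < a i}"
      unfolding eq using finV apos by (intro Min_in) auto
    then show ?thesis using that run by (auto simp: lnd_run_def)
  qed
  have ds1_nn: "0 \<le> ds 1" using i0 hnn[of "{i0}"] by simp
  have f1_le: "?f (ds 1) \<le> 0"
  proof -
    have "?f (ds 1) \<le> hdelta h a (ds 1) {i0}" using finV i0 by (intro fval_le) auto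
    also have "\<dots> = 0" using i0 by (simp add: hdelta_def asum_def)
    finally show ?thesis .
  qed
  have runstep: "\<And>k. 1 \<le> k \<Longrightarrow> k < l \<Longrightarrow> \<exists>S1 S2.
        is_minimizer V h a (ds k - ?f (ds k) / gs k) S1 \<and>
        is_minimizer V h a (2 * (ds k - ?f (ds k) / gs k) - ds k) S2 \<and>
        \<not> (?f (ds k - ?f (ds k) / gs k) < 0 \<and> 0 \<le> - asum a S1) \<and>
        (if ?f (2 * (ds k - ?f (ds k) / gs k) - ds k) < 0 \<and> - asum a S2 < 0
         then ds (Suc k) = 2 * (ds k - ?f (ds k) / gs k) - ds k \<and> gs (Suc k) = - asum a S2
         else ds (Suc k) = ds k - ?f (ds k) / gs k \<and> gs (Suc k) = - asum a S1)"
  proof -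
    fix k assume "1 \<le> k" "k < l"
    then have "k \<in> {1..<l}" by simp
    then show "?thesis k" using run unfolding lnd_run_def Let_def by blast
  qed
  have fnz: "\<And>k. 1 \<le> k \<Longrightarrow> k < l \<Longrightarrow> ?f (ds k) \<noteq> 0" using run by (auto simp: lnd_run_def)
  have inv: "\<And>k. 1 \<le> k \<Longrightarrow> k < l \<Longrightarrow> ?f (ds k) < 0 \<and> gs k < 0 \<and>
      (\<exists>T. is_minimizer V h a (ds k) T \<and> gs k = - asum a T)"
  proof -
    fix k show "1 \<le> k \<Longrightarrow> k < l \<Longrightarrow> ?f (ds k) < 0 \<and> gs k < 0 \<and>
      (\<exists>T. is_minimizer V h a (ds k) T \<and> gs k = - asum a T)"
    proof (induction k)
      case 0 then show ?case by simp
    next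
      case (Suc k)
      show ?case
      proof (cases "k = 0")
        case True
        then have f1: "?f (ds 1) < 0" using f1_le fnz[of 1] Suc.prems by force
        then obtain T where T: "is_minimizer V h a (ds 1) T" "gs 1 = - asum a T"
          using run by (auto simp: lnd_run_def)
        have "hdelta h a (ds 1) T < 0" using minimizer_val[OF finV T(1)] f1 by simp
        moreover have "0 \<le> h T" using T(1) hnn by (auto simp: is_minimizer_def)
        ultimately have "0 < ds 1 * asum a T" by (simp add: hdelta_def)
        then have "0 < asum a T" using ds1_nn by (simp add: zero_less_mult_iff)
        then show ?thesis using True f1 T by auto
      next
        case False
        then have k1: "1 \<le> k" "k < l" using Suc.prems by auto
        have IH: "?f (ds k) < 0" "gs k < 0" and "\<exists>T. is_minimizer V h a (ds k) T \<and> gs k = - asum a T"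
          using Suc.IH k1 by auto
        then obtain Tk where Tk: "is_minimizer V h a (ds k) Tk" "gs k = - asum a Tk" by blast
        define d where "d = ds k - ?f (ds k) / gs k"
        have fd: "?f d \<le> 0"
        proof -
          have "?f d \<le> hdelta h a d Tk" using finV Tk(1) by (intro fval_le) (auto simp: is_minimizer_def)
          also have "\<dots> = hdelta h a (ds k) Tk + (ds k - d) * asum a Tk" by (simp add: hdelta_def algebra_simps)
          also have "\<dots> = ?f (ds k) + (?f (ds k) / gs k) * (- gs k)"
            using minimizer_val[OF finV Tk(1)] Tk(2) by (simp add: d_def)
          also have "\<dots> = 0" using IH(2) by simp
          finally show ?thesis .
        qed
        have fnz': "?f (ds (Suc k)) \<noteq> 0" using fnz Suc.prems by simp
        from runstep[OF k1] obtain S1 S2 where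
          m1: "is_minimizer V h a d S1" and m2: "is_minimizer V h a (2 * d - ds k) S2"
          and nb: "\<not> (?f d < 0 \<and> 0 \<le> - asum a S1)"
          and ite: "if ?f (2 * d - ds k) < 0 \<and> - asum a S2 < 0
           then ds (Suc k) = 2 * d - ds k \<and> gs (Suc k) = - asum a S2
           else ds (Suc k) = d \<and> gs (Suc k) = - asum a S1"
          unfolding d_def by blast
        show ?thesis
        proof (cases "?f (2 * d - ds k) < 0 \<and> - asum a S2 < 0")
          case True
          then show ?thesis using ite m2 by auto
        next
          case False
          then have e: "ds (Suc k) = d" "gs (Suc k) = - asum a S1" using ite by auto
          then have "?f d < 0" using fd fnz' by auto
          then show ?thesis using nb e m1 by auto
        qed
      qed
    qed
  qed
  define A where "A k = - gs k" for k
  define x where "x k = ds k - dstar" for k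
  define ph where "ph k = hdelta h a dstar (S k)" for k
  have Apos: "\<And>k. 1 \<le> k \<Longrightarrow> k < l \<Longrightarrow> 0 < A k" using inv by (auto simp: A_def)
  have fneg: "\<And>k. 1 \<le> k \<Longrightarrow> k < l \<Longrightarrow> ?f (ds k) < 0" using inv by auto
  have fle: "\<And>k. 1 \<le> k \<Longrightarrow> k \<le> l \<Longrightarrow> ?f (ds k) \<le> 0"
    using fneg root last by (metis le_less order.refl)
  have xge: "\<And>k. 1 \<le> k \<Longrightarrow> k \<le> l \<Longrightarrow> 0 \<le> x k"
    using decr last by (metis x_def diff_ge_0_iff_ge le_less order.refl)
  have xdec: "\<And>k. 1 \<le> k \<Longrightarrow> Suc k \<le> l \<Longrightarrow> x (Suc k) < x k"
    using decr by (simp add: x_def)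
  have Smin: "\<And>k. 1 \<le> k \<Longrightarrow> k \<le> l \<Longrightarrow> is_minimizer V h a (ds k) (S k)" using Sdef by auto
  have phexp: "\<And>k. 1 \<le> k \<Longrightarrow> k \<le> l \<Longrightarrow> ph k = ?f (ds k) + x k * asum a (S k)"
  proof -
    fix k assume k: "1 \<le> k" "k \<le> l"
    show "ph k = ?f (ds k) + x k * asum a (S k)"
      using minimizer_val[OF finV Smin[OF k]] by (simp add: ph_def x_def hdelta_def algebra_simps)
  qed
  have Bge: "\<And>k. 1 \<le> k \<Longrightarrow> k < l \<Longrightarrow> A k \<le> asum a (S k)"
  proof -
    fix k assume k: "1 \<le> k" "k < l"
    then obtain T where "is_minimizer V h a (ds k) T" "gs k = - asum a T" using inv by blast
    then show "A k \<le> asum a (S k)" using Sdef k by (auto simp: A_def)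
  qed
  have Ble: "\<And>k. 1 \<le> k \<Longrightarrow> Suc k \<le> l \<Longrightarrow> asum a (S (Suc k)) \<le> A k"
  proof -
    fix k assume k: "1 \<le> k" "Suc k \<le> l"
    then obtain T where T: "is_minimizer V h a (ds k) T" "gs k = - asum a T" using inv by force
    have "ds (Suc k) < ds k" using decr k by simp
    from slope_mono[OF this Smin[of "Suc k"] T(1)] k T(2) show "asum a (S (Suc k)) \<le> A k"
      by (simp add: A_def)
  qed
  have Ale: "\<And>k. 1 \<le> k \<Longrightarrow> Suc k < l \<Longrightarrow> A (Suc k) \<le> A k"
  proof -
    fix k assume k: "1 \<le> k" "Suc k < l"
    then obtain T where T: "is_minimizer V h a (ds k) T" "gs k = - asum a T" using inv by force
    obtain T' where T': "is_minimizer V h a (ds (Suc k)) T'" "gs (Suc k) = - asum a T'"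
      using inv[of "Suc k"] k by force
    have "ds (Suc k) < ds k" using decr k by simp
    from slope_mono[OF this T'(1) T(1)] T(2) T'(2) show "A (Suc k) \<le> A k"
      by (simp add: A_def)
  qed
  have stepfacts: "\<And>k. 1 \<le> k \<Longrightarrow> Suc k \<le> l \<Longrightarrow>
      x (Suc k) \<le> x k + ?f (ds k) / A k \<and>
      (Suc k < l \<longrightarrow> 2 * (x (Suc k) * A (Suc k)) \<le> x k * A k)"
  proof -
    fix k assume k: "1 \<le> k" "Suc k \<le> l"
    then have k1: "1 \<le> k" "k < l" by auto
    have Ak: "0 < A k" using Apos k1 by simp
    have fk: "?f (ds k) < 0" using fneg k1 by simp
    define d where "d = ds k - ?f (ds k) / gs k"
    have dA: "d = ds k + ?f (ds k) / A k" by (simp add: d_def A_def)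
    from runstep[OF k1] obtain S1 S2 where
      m1: "is_minimizer V h a d S1" and m2: "is_minimizer V h a (2 * d - ds k) S2"
      and ite: "if ?f (2 * d - ds k) < 0 \<and> - asum a S2 < 0
       then ds (Suc k) = 2 * d - ds k \<and> gs (Suc k) = - asum a S2
       else ds (Suc k) = d \<and> gs (Suc k) = - asum a S1"
      unfolding d_def by blast
    have dle: "d \<le> ds k" using dA Ak fk divide_nonpos_pos[of "?f (ds k)" "A k"] by simp
    have xs0: "0 \<le> x (Suc k)" using xge k by simp
    have xsle: "x (Suc k) \<le> x k" using xdec k by fastforce
    show "x (Suc k) \<le> x k + ?f (ds k) / A k \<and>
      (Suc k < l \<longrightarrow> 2 * (x (Suc k) * A (Suc k)) \<le> x k * A k)"
    proof (cases "?f (2 * d - ds k) < 0 \<and> - asum a S2 < 0")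
      case True
      then have e: "ds (Suc k) = 2 * d - ds k" "A (Suc k) = asum a S2" using ite by (auto simp: A_def)
      have "x (Suc k) \<le> x k + ?f (ds k) / A k" using e dle dA by (simp add: x_def)
      moreover have "2 * A (Suc k) < A k"
      proof -
        have "?f (ds k) \<le> hdelta h a (ds k) S2" using finV m2 by (intro fval_le) (auto simp: is_minimizer_def)
        also have "\<dots> = hdelta h a (2 * d - ds k) S2 - (ds k - (2 * d - ds k)) * asum a S2"
          by (simp add: hdelta_def algebra_simps)
        also have "\<dots> = ?f (2 * d - ds k) + 2 * (?f (ds k) / A k) * A (Suc k)"
          using minimizer_val[OF finV m2] e dA by (simp add: algebra_simps)
        finally have "?f (ds k) < 2 * (?f (ds k) / A k) * A (Suc k)" using True by simp
        then have "?f (ds k) * A k < 2 * ?f (ds k) * A (Suc k)" using Ak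
          by (simp add: field_simps)
        then have "?f (ds k) * A k < ?f (ds k) * (2 * A (Suc k))" by (simp add: algebra_simps)
        then show ?thesis using fk by (simp add: mult_less_cancel_left_neg)
      qed
      moreover have "x (Suc k) * (2 * A (Suc k)) \<le> x k * A k"
      proof -
        have "x (Suc k) * (2 * A (Suc k)) \<le> x (Suc k) * A k"
          using calculation(2) xs0 by (intro mult_left_mono) auto
        also have "\<dots> \<le> x k * A k" using xsle Ak by (intro mult_right_mono) auto
        finally show ?thesis .
      qed
      ultimately show ?thesis by (simp add: algebra_simps)
    next
      case False
      then have e: "ds (Suc k) = d" using ite by auto
      have "2 * d - ds k \<le> dstar"
      proof (rule ccontr)
        assume c: "\<not> 2 * d - ds k \<le> dstar"
        then have fn: "?f (2 * d - ds k) < 0" using neg_right[OF finV apos largest] by simp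
        then have "0 \<le> - asum a S2" using False by simp
        moreover have "hdelta h a (2 * d - ds k) S2 < 0" using minimizer_val[OF finV m2] fn by simp
        moreover have "0 \<le> h S2" using hnn m2 by (auto simp: is_minimizer_def)
        ultimately have "0 < (2 * d - ds k) * asum a S2" "asum a S2 \<le> 0" by (auto simp: hdelta_def)
        then have "2 * d - ds k < 0" by (simp add: zero_less_mult_iff)
        then show False using c dstar_nn by simp
      qed
      then have x2: "2 * x (Suc k) \<le> x k" using e by (simp add: x_def)
      have "x (Suc k) \<le> x k + ?f (ds k) / A k" using e dA by (simp add: x_def)
      moreover have "Suc k < l \<longrightarrow> 2 * (x (Suc k) * A (Suc k)) \<le> x k * A k"
      proof
        assume "Suc k < l"
        then have "A (Suc k) \<le> A k" "0 < A (Suc k)" using Ale Apos k by auto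
        then have "2 * x (Suc k) * A (Suc k) \<le> 2 * x (Suc k) * A k" using xs0 by (simp add: mult_left_mono)
        also have "\<dots> \<le> x k * A k" using x2 Ak by (simp add: mult_right_mono)
        finally show "2 * (x (Suc k) * A (Suc k)) \<le> x k * A k" by simp
      qed
      ultimately show ?thesis by simp
    qed
  qed
  have phlow: "\<And>k. 1 \<le> k \<Longrightarrow> Suc k \<le> l \<Longrightarrow> A k * x (Suc k) \<le> ph k"
  proof -
    fix k assume k: "1 \<le> k" "Suc k \<le> l"
    have Ak: "0 < A k" using Apos k by simp
    have "A k * x (Suc k) \<le> A k * (x k + ?f (ds k) / A k)"
      using stepfacts[OF k] Ak by (intro mult_left_mono) auto
    also have "\<dots> = ?f (ds k) + x k * A k" using Ak by (simp add: field_simps)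
    also have "\<dots> \<le> ?f (ds k) + x k * asum a (S k)"
      using Bge[of k] k xge[of k] by (simp add: mult_left_mono)
    also have "\<dots> = ph k" using phexp[of k] k by simp
    finally show "A k * x (Suc k) \<le> ph k" .
  qed
  have phup: "\<And>k. 1 \<le> k \<Longrightarrow> Suc k \<le> l \<Longrightarrow> ph (Suc k) \<le> x (Suc k) * A k"
  proof -
    fix k assume k: "1 \<le> k" "Suc k \<le> l"
    have "ph (Suc k) = ?f (ds (Suc k)) + x (Suc k) * asum a (S (Suc k))" using phexp[of "Suc k"] k by simp
    also have "\<dots> \<le> x (Suc k) * asum a (S (Suc k))" using fle[of "Suc k"] k by simp
    also have "\<dots> \<le> x (Suc k) * A k" using Ble[OF k] xge[of "Suc k"] k by (simp add: mult_left_mono)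
    finally show "ph (Suc k) \<le> x (Suc k) * A k" .
  qed
  have ph_nn: "\<And>k. 1 \<le> k \<Longrightarrow> k \<le> l \<Longrightarrow> 0 \<le> ph k"
    using part1 Smin by (auto simp: ph_def nonneg_on_def is_minimizer_def)
  have key: "\<And>i. 1 \<le> i \<Longrightarrow> i + 4 \<le> l \<Longrightarrow> 4 * ph (i + 4) < ph i"
  proof -
    fix i assume i: "1 \<le> i" "i + 4 \<le> l"
    have A3: "0 < A (i + 3)" using Apos i by simp
    have "ph (i + 4) \<le> x (i + 4) * A (i + 3)" using phup[of "i + 3"] i by (simp add: numeral_eq_Suc)
    also have "\<dots> < x (i + 3) * A (i + 3)" using xdec[of "i + 3"] i A3 by (simp add: numeral_eq_Suc)
    finally have c1: "ph (i + 4) < x (i + 3) * A (i + 3)" .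
    have c2: "2 * (x (i + 3) * A (i + 3)) \<le> x (i + 2) * A (i + 2)"
      using stepfacts[of "i + 2"] i by (simp add: numeral_eq_Suc)
    have c3: "2 * (x (i + 2) * A (i + 2)) \<le> x (i + 1) * A (i + 1)"
      using stepfacts[of "i + 1"] i by (simp add: numeral_eq_Suc)
    have c4: "x (i + 1) * A (i + 1) \<le> x (i + 1) * A i"
      using Ale[of i] i xge[of "i + 1"] by (simp add: mult_left_mono)
    have c5: "A i * x (Suc i) \<le> ph i" using phlow[of i] i by simp
    show "4 * ph (i + 4) < ph i" using c1 c2 c3 c4 c5 by (simp add: algebra_simps)
  qed
  define q where "q = (l + 3) div 4"
  define T where "T = (\<lambda>i. S (l - 4 * (i - 1)))"
  define G where "G j = hdelta h a dstar (T j)" for j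
  have qb: "\<And>j. 1 \<le> j \<Longrightarrow> j \<le> q \<Longrightarrow> 4 * (j - 1) + 1 \<le> l"
    unfolding q_def by presburger
  have Gstep: "\<And>j. j \<in> {1..<q} \<Longrightarrow> G (Suc j) > 4 * G j"
  proof -
    fix j assume j: "j \<in> {1..<q}"
    define i where "i = l - 4 * j"
    have ij: "1 \<le> i" "i + 4 \<le> l" "l - 4 * (Suc j - 1) = i" "l - 4 * (j - 1) = i + 4"
      using qb[of "Suc j"] j unfolding i_def by auto
    show "G (Suc j) > 4 * G j"
      using key[OF ij(1,2)] unfolding G_def T_def ph_def ij(3,4) by simp
  qed
  have G_nn: "\<And>j. 1 \<le> j \<Longrightarrow> j \<le> q \<Longrightarrow> 0 \<le> G j"
  proof -
    fix j assume j: "1 \<le> j" "j \<le> q"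
    have "1 \<le> l - 4 * (j - 1)" "l - 4 * (j - 1) \<le> l" using qb[OF j] by linarith+
    then show "0 \<le> G j" using ph_nn unfolding G_def T_def ph_def by blast
  qed
  have Gmono: "\<And>j m. 1 \<le> j \<Longrightarrow> j + Suc m \<le> q \<Longrightarrow> G j < G (j + Suc m)"
  proof -
    fix j m show "1 \<le> j \<Longrightarrow> j + Suc m \<le> q \<Longrightarrow> G j < G (j + Suc m)"
    proof (induction m)
      case 0
      then show ?case using Gstep[of j] G_nn[of j] by simp
    next
      case (Suc m)
      then have "G j < G (j + Suc m)" by simp
      moreover have "4 * G (j + Suc m) < G (Suc (j + Suc m))" using Gstep[of "j + Suc m"] Suc.prems by simp
      ultimately show ?case using G_nn[of "j + Suc m"] Suc.prems by simp
    qed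
  qed
  have inj: "inj_on T {1..q}"
  proof (rule inj_onI)
    fix j j' assume jj: "j \<in> {1..q}" "j' \<in> {1..q}" "T j = T j'"
    show "j = j'"
    proof (rule ccontr)
      assume "j \<noteq> j'"
      then consider "j < j'" | "j' < j" by linarith
      then show False
      proof cases
        case 1
        obtain m where m0: "j' = Suc (j + m)" using less_imp_Suc_add[OF `j < j'`] by blast
        then have m: "j' = j + Suc m" by simp
        have "1 \<le> j" "j + Suc m \<le> q" using jj(1,2) m by auto
        then have "G j < G (j + Suc m)" by (rule Gmono)
        then have "G j < G j'" using m by simp
        moreover have "G j = G j'" using jj(3) by (simp add: G_def)
        ultimately show False by simp
      next
        case 2
        obtain m where m0: "j = Suc (j' + m)" using less_imp_Suc_add[OF `j' < j`] by blast
        then have m: "j = j' + Suc m" by simp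
        have "1 \<le> j'" "j' + Suc m \<le> q" using jj(1,2) m by auto
        then have "G j' < G (j' + Suc m)" by (rule Gmono)
        then have "G j' < G j" using m by simp
        moreover have "G j = G j'" using jj(3) by (simp add: G_def)
        ultimately show False by simp
      qed
    qed
  qed
  have gs4: "\<forall>i\<in>{1..<q}. hdelta h a dstar (T (Suc i)) > 4 * hdelta h a dstar (T i)"
    using Gstep by (simp add: G_def)
  have "inj_on T {1..q} \<and> (\<forall>i\<in>{1..<q}. hdelta h a dstar (T (Suc i)) > 4 * hdelta h a dstar (T i))"
    using inj gs4 by blast
  then show ?thesis using part1 part2 unfolding Let_def q_def T_def by blast
qed

end
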